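(* Let $\alpha<\tfrac12$. For every $k\in\mathbb N$ and every $\varepsilon>0$, $\widetilde\varphi_k(x)=O(x^\varepsilon)$ as $x\to\infty$.
   Context: $\mathrm m(x):=x^{1-4\alpha}e^{-1/(2x^2)}$ for $x>0$. The canonical $*$-moment functions are defined recursively by $\widetilde\varphi_{-1}:\equiv0$, $\widetilde\varphi_0:\equiv1$ and, for $k\in\mathbb N$ and $x\ge0$, $$\widetilde\varphi_k(x):=4k\int_0^x\frac1{y^2\mathrm m(y)}\int_0^y\mathrm m(\xi)\bigl[(1-2\alpha)\widetilde\varphi_{k-1}(\xi)+(k-1)\widetilde\varphi_{k-2}(\xi)\bigr]d\xi\,dy.$$ *)

theory Defs
  imports "HOL-Analysis.Analysis" "HOL-Library.Landau_Symbols"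
begin

definition mw :: "real \<Rightarrow> real \<Rightarrow> real" where
  "mw \<alpha> x = x powr (1 - 4*\<alpha>) * exp (- 1 / (2 * x^2))"

definition phi_step :: "real \<Rightarrow> nat \<Rightarrow> (real \<Rightarrow> real) \<Rightarrow> (real \<Rightarrow> real) \<Rightarrow> real \<Rightarrow> real" where
  "phi_step \<alpha> k f g x =
     4 * real k * integral {0..x} (\<lambda>y. (1 / (y^2 * mw \<alpha> y)) *
        integral {0..y} (\<lambda>\<xi>. mw \<alpha> \<xi> * ((1 - 2*\<alpha>) * f \<xi> + real (k - 1) * g \<xi>)))"

text \<open>Canonical *-moment functions: phit a k = \<phi>~_k, with \<phi>~_(-1) = 0, \<phi>~_0 = 1.\<close>
fun phit :: "real \<Rightarrow> nat \<Rightarrow> real \<Rightarrow> real" where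
  "phit \<alpha> 0 = (\<lambda>x. 1)"
| "phit \<alpha> (Suc 0) = phi_step \<alpha> 1 (\<lambda>x. 1) (\<lambda>x. 0)"
| "phit \<alpha> (Suc (Suc k)) = phi_step \<alpha> (Suc (Suc k)) (phit \<alpha> (Suc k)) (phit \<alpha> k)"

end

theory Submission
  imports Defs
begin

lemma lim0:
  assumes p: "p > 0"
  shows "((\<lambda>x::real. x powr p * exp (- 1 / (2 * x^2))) \<longlongrightarrow> 0) (at_right 0)"
proof (rule Lim_null_comparison)
  show "\<forall>\<^sub>F x in at_right 0. norm (x powr p * exp (- 1 / (2 * x^2))) \<le> x powr p"
  proof (rule eventually_at_rightI[of 0 1])
    fix x :: real assume x: "x \<in> {0<..<1}"
    have "exp (- 1 / (2 * x^2)) \<le> 1" by simp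
    hence "x powr p * exp (- 1 / (2 * x^2)) \<le> x powr p * 1" by (intro mult_left_mono) auto
    thus "norm (x powr p * exp (- 1 / (2 * x^2))) \<le> x powr p" by simp
  qed simp
  show "((\<lambda>x::real. x powr p) \<longlongrightarrow> 0) (at_right 0)"
    by (rule tendsto_zero_powrI[OF _ tendsto_const _ p])
       (auto intro: tendsto_ident_at eventually_at_rightI[of 0 1])
qed

lemma Gcont:
  assumes p: "p > 0"
  shows "continuous_on {0..} (\<lambda>x::real. x powr p * exp (- 1 / (2 * x^2)))"
proof -
  have "continuous (at x within {0..}) (\<lambda>x::real. x powr p * exp (- 1 / (2 * x^2)))" if "x \<ge> 0" for x
  proof (cases "x = 0")
    case True
    have "((\<lambda>x::real. x powr p * exp (- 1 / (2 * x^2))) \<longlongrightarrow> 0 powr p * exp (- 1 / (2 * 0^2))) (at 0 within {0..})"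
      using lim0[OF p] by (simp add: at_within_Ici_at_right)
    thus ?thesis using True by (simp add: continuous_within)
  next
    case False
    hence "x > 0" using that by simp
    hence "isCont (\<lambda>x::real. x powr p * exp (- 1 / (2 * x^2))) x" by (intro continuous_intros) auto
    thus ?thesis using continuous_at_imp_continuous_at_within by blast
  qed
  thus ?thesis using continuous_on_eq_continuous_within by blast
qed

lemma Gderiv:
  assumes "x > 0"
  shows "((\<lambda>x::real. x powr p * exp (- 1 / (2 * x^2))) has_real_derivative
     (p * x powr (p-1) * exp (- 1 / (2 * x^2)) + x powr (p-3) * exp (- 1 / (2 * x^2)))) (at x)"
proof -
  have "((\<lambda>x::real. x powr p * exp (- 1 / (2 * x^2))) has_real_derivative
     (p * x powr (p-1) * exp (- 1 / (2 * x^2)) + x powr p * (exp (- 1 / (2 * x^2)) * (1 / x^3)))) (at x)"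
  proof -
    have d1: "((\<lambda>x. - 1 / (2 * x^2)) has_real_derivative 1 / x^3) (at x)"
      using assms
      by (auto intro!: derivative_eq_intros simp: field_simps power2_eq_square power3_eq_cube)
    have "((\<lambda>x. exp (- 1 / (2 * x^2))) has_real_derivative exp (- 1 / (2 * x^2)) * (1 / x^3)) (at x)"
      using DERIV_chain2[OF DERIV_exp d1] by simp
    from DERIV_mult[OF has_real_derivative_powr[OF assms, of p] this]
    show ?thesis by (simp add: algebra_simps)
  qed
  moreover have "p * x powr (p-1) * exp (- 1 / (2 * x^2)) + x powr p * (exp (- 1 / (2 * x^2)) * (1 / x^3))
     = p * x powr (p-1) * exp (- 1 / (2 * x^2)) + x powr (p-3) * exp (- 1 / (2 * x^2))" using assms
    by (simp add: powr_diff powr_realpow divide_simps)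
  ultimately show ?thesis by metis
qed

lemma Gint:
  assumes "y \<ge> 0" and p: "p > 0"
  shows "((\<lambda>x::real. p * x powr (p-1) * exp (- 1 / (2 * x^2)) + x powr (p-3) * exp (- 1 / (2 * x^2)))
     has_integral (y powr p * exp (- 1 / (2 * y^2)))) {0..y}"
proof -
  have "((\<lambda>x::real. p * x powr (p-1) * exp (- 1 / (2 * x^2)) + x powr (p-3) * exp (- 1 / (2 * x^2)))
     has_integral (y powr p * exp (- 1 / (2 * y^2)) - 0 powr p * exp (- 1 / (2 * 0^2)))) {0..y}"
    apply (rule fundamental_theorem_of_calculus_interior[OF assms(1)])
    using Gcont[OF p] apply (rule continuous_on_subset) apply auto[1]
    using Gderiv has_real_derivative_iff_has_vector_derivative by auto
  thus ?thesis by simp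
qed


lemma mw_nonneg: "x \<ge> 0 \<Longrightarrow> mw \<alpha> x \<ge> 0" by (simp add: mw_def)
lemma mw_pos: "x > 0 \<Longrightarrow> mw \<alpha> x > 0" by (simp add: mw_def)

lemma mw_int:
  assumes \<alpha>: "\<alpha> < 1/2"
  shows "mw \<alpha> integrable_on {0..y}"
proof (cases "y \<ge> 0")
  case False
  hence "{0..y} = {}" by auto
  thus ?thesis using integrable_on_empty by metis
next
  case True
  define p where "p = 4 - 4*\<alpha>"
  have p: "p > 0" "p - 1 > 0" using \<alpha> p_def by auto
  define E where "E = (\<lambda>x::real. exp (- 1 / (2 * x^2)))"
  have I1: "(\<lambda>x. p * x powr (p-1) * E x + x powr (p-3) * E x) integrable_on {0..y}"
    unfolding E_def using Gint[OF True p(1)] by blast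
  have "continuous_on {0..y} (\<lambda>x. p * (x powr (p-1) * E x))"
    unfolding E_def
    by (intro continuous_on_mult_left, rule continuous_on_subset[OF Gcont[OF p(2)]]) auto
  hence I2: "(\<lambda>x. p * x powr (p-1) * E x) integrable_on {0..y}"
    by (simp add: mult.assoc integrable_continuous_interval)
  have "(\<lambda>x. (p * x powr (p-1) * E x + x powr (p-3) * E x) - p * x powr (p-1) * E x) integrable_on {0..y}"
    by (rule integrable_diff[OF I1 I2])
  moreover have "p - 3 = 1 - 4*\<alpha>" using p_def by simp
  hence "(\<lambda>x. (p * x powr (p-1) * E x + x powr (p-3) * E x) - p * x powr (p-1) * E x) = mw \<alpha>"
    by (auto simp: mw_def E_def)
  ultimately show ?thesis by simp
qed

lemma M_bound1:
  assumes "\<alpha> < 1/2" "y > 0"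
  shows "integral {0..y} (mw \<alpha>) \<le> y * mw \<alpha> y / (2 - 4*\<alpha>)"
proof -
  define p where "p = 2 - 4*\<alpha>"
  have p: "p > 0" using assms p_def by simp
  define E where "E = (\<lambda>x::real. exp (- 1 / (2 * x^2)))"
  have I: "((\<lambda>x. (p * x powr (p-1) * E x + x powr (p-3) * E x) / p) has_integral (y powr p * E y / p)) {0..y}"
    unfolding E_def by (rule has_integral_divide, rule Gint) (use assms p in auto)
  have "integral {0..y} (mw \<alpha>) \<le> y powr p * E y / p"
  proof (rule has_integral_le[OF integrable_integral[OF mw_int[OF assms(1)]] I])
    fix x assume x: "x \<in> {0..y}"
    show "mw \<alpha> x \<le> (p * x powr (p-1) * E x + x powr (p-3) * E x) / p"
    proof (cases "x = 0")
      case True thus ?thesis by (simp add: mw_def)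
    next
      case False
      have "p - 1 = 1 - 4*\<alpha>" using p_def by simp
      hence e: "mw \<alpha> x = x powr (p-1) * E x" by (simp add: mw_def E_def)
      have "x powr (p-3) * E x \<ge> 0" unfolding E_def by simp
      thus ?thesis using p unfolding e by (simp add: field_simps)
    qed
  qed
  also have "y powr p = y * y powr (1 - 4*\<alpha>)"
  proof -
    show ?thesis unfolding p_def using powr_add[of y 1 "1-4*\<alpha>"] assms by (simp add: algebra_simps)
  qed
  finally show ?thesis unfolding p_def E_def mw_def by (simp add: mult.assoc)
qed

lemma M_bound3:
  assumes "\<alpha> < 1/2" "y > 0"
  shows "integral {0..y} (mw \<alpha>) \<le> y^3 * mw \<alpha> y"
proof -
  define p where "p = 4 - 4*\<alpha>"
  have p: "p > 0" using assms p_def by simp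
  define E where "E = (\<lambda>x::real. exp (- 1 / (2 * x^2)))"
  have I: "((\<lambda>x. (p * x powr (p-1) * E x + x powr (p-3) * E x)) has_integral (y powr p * E y)) {0..y}"
    unfolding E_def by (rule Gint) (use assms p in auto)
  have "integral {0..y} (mw \<alpha>) \<le> y powr p * E y"
  proof (rule has_integral_le[OF integrable_integral[OF mw_int[OF assms(1)]] I])
    fix x assume x: "x \<in> {0..y}"
    show "mw \<alpha> x \<le> (p * x powr (p-1) * E x + x powr (p-3) * E x)"
    proof (cases "x = 0")
      case True thus ?thesis by (simp add: mw_def)
    next
      case False
      have "p - 3 = 1 - 4*\<alpha>" using p_def by simp
      hence e: "mw \<alpha> x = x powr (p-3) * E x" by (simp add: mw_def E_def)
      have "p * x powr (p-1) * E x \<ge> 0" unfolding E_def using p by simp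
      thus ?thesis unfolding e by simp
    qed
  qed
  also have "y powr p = y^3 * y powr (1 - 4*\<alpha>)"
  proof -
    have "y powr p = y powr (real 3) * y powr (1 - 4*\<alpha>)"
      unfolding p_def using powr_add[of y "real 3" "1-4*\<alpha>"] by (simp add: algebra_simps)
    also have "y powr (real 3) = y^3" using assms(2) by (rule powr_realpow)
    finally show ?thesis .
  qed
  finally show ?thesis unfolding p_def E_def mw_def by (simp add: mult.assoc)
qed

lemma ratio_bound:
  assumes "\<alpha> < 1/2" "y > 0"
  shows "integral {0..y} (mw \<alpha>) / (y^2 * mw \<alpha> y) \<le> (2 * max 1 (1 / (2 - 4*\<alpha>))) / (1 + y)"
proof -
  define c where "c = 2 - 4*\<alpha>"
  have c: "c > 0" using assms c_def by simp
  define M where "M = integral {0..y} (mw \<alpha>)"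
  have m: "mw \<alpha> y > 0" using assms mw_pos by simp
  have den: "y^2 * mw \<alpha> y > 0" using m assms by simp
  have b1: "M / (y^2 * mw \<alpha> y) \<le> 1 / (c * y)"
  proof -
    have "M \<le> y * mw \<alpha> y / c" using M_bound1[OF assms] c_def M_def by simp
    hence "M / (y^2 * mw \<alpha> y) \<le> (y * mw \<alpha> y / c) / (y^2 * mw \<alpha> y)"
      using divide_right_mono[OF _ less_imp_le[OF den]] by blast
    also have "\<dots> = 1 / (c * y)" using m assms c by (simp add: field_simps power2_eq_square)
    finally show ?thesis .
  qed
  have b3: "M / (y^2 * mw \<alpha> y) \<le> y"
  proof -
    have "M \<le> y^3 * mw \<alpha> y" using M_bound3[OF assms] M_def by simp
    hence "M / (y^2 * mw \<alpha> y) \<le> (y^3 * mw \<alpha> y) / (y^2 * mw \<alpha> y)"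
      using divide_right_mono[OF _ less_imp_le[OF den]] by blast
    also have "\<dots> = y" using m assms by (simp add: field_simps power2_eq_square power3_eq_cube)
    finally show ?thesis .
  qed
  define K where "K = 2 * max 1 (1 / c)"
  have "M / (y^2 * mw \<alpha> y) \<le> K / (1 + y)"
  proof (cases "y \<le> 1")
    case True
    have "y*y \<le> y" using True assms by (intro mult_left_le) auto
    hence "y + y*y \<le> 2" using True by linarith
    hence "y \<le> 2 / (1 + y)" using assms by (simp add: field_simps)
    also have "\<dots> \<le> K / (1 + y)" using assms unfolding K_def by (intro divide_right_mono) auto
    finally show ?thesis using b3 by simp
  next
    case False
    have "c*(1+y) \<le> c*(2*y)" using False c by (intro mult_left_mono) auto
    moreover have "c + c*y > 0" using False c by (simp add: add_pos_pos)
    ultimately have "1 / (c * y) \<le> (2 / c) / (1 + y)" using False c by (simp add: divide_simps algebra_simps)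
    also have "\<dots> \<le> K / (1 + y)" using assms unfolding K_def by (intro divide_right_mono) auto
    finally show ?thesis using b1 by simp
  qed
  thus ?thesis unfolding M_def K_def c_def .
qed


lemma abs_integral_le:
  fixes f g :: "real \<Rightarrow> real"
  assumes "g integrable_on S" "\<And>x. x \<in> S \<Longrightarrow> \<bar>f x\<bar> \<le> g x"
  shows "\<bar>integral S f\<bar> \<le> integral S g"
proof (cases "f integrable_on S")
  case True
  thus ?thesis using integral_norm_bound_integral[OF True assms(1)] assms(2) by auto
next
  case False
  hence "integral S f = 0" by (simp add: not_integrable_integral)
  moreover have "integral S g \<ge> 0"
    by (rule integral_nonneg[OF assms(1)]) (use assms(2) in force)
  ultimately show ?thesis by simp
qed

lemma int_powr:
  assumes "x \<ge> 0" "\<delta> > 0"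
  shows "((\<lambda>y::real. (1+y) powr (\<delta>-1)) has_integral ((1+x) powr \<delta> / \<delta> - 1 / \<delta>)) {0..x}"
proof -
  have "((\<lambda>y::real. (1+y) powr (\<delta>-1)) has_integral ((\<lambda>y. (1+y) powr \<delta> / \<delta>) x - (\<lambda>y. (1+y) powr \<delta> / \<delta>) 0)) {0..x}"
  proof (rule fundamental_theorem_of_calculus_interior[OF assms(1)])
    show "continuous_on {0..x} (\<lambda>y::real. (1+y) powr \<delta> / \<delta>)"
      using assms by (intro continuous_intros) auto
    fix y assume y: "y \<in> {0<..<x}"
    have "((\<lambda>y::real. (1+y) powr \<delta> / \<delta>) has_real_derivative (1+y) powr (\<delta>-1)) (at y)"
      using y assms by (auto intro!: derivative_eq_intros)
    thus "((\<lambda>y::real. (1+y) powr \<delta> / \<delta>) has_vector_derivative (1+y) powr (\<delta>-1)) (at y)"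
      by (simp add: has_real_derivative_iff_has_vector_derivative)
  qed
  thus ?thesis by simp
qed

lemma step_bound:
  fixes f g :: "real \<Rightarrow> real"
  assumes \<alpha>: "\<alpha> < 1/2" and \<delta>: "\<delta> > 0" and A: "A \<ge> 0"
    and hf: "\<And>x. x \<ge> 0 \<Longrightarrow> \<bar>f x\<bar> \<le> A * (1+x) powr \<delta>"
    and hg: "\<And>x. x \<ge> 0 \<Longrightarrow> \<bar>g x\<bar> \<le> A * (1+x) powr \<delta>"
  shows "\<exists>C. \<forall>x\<ge>0. \<bar>phi_step \<alpha> n f g x\<bar> \<le> C * (1+x) powr \<delta>"
proof -
  define K where "K = 2 * max 1 (1 / (2 - 4*\<alpha>))"
  have K: "K \<ge> 0" unfolding K_def by simp
  define B where "B = (\<bar>1 - 2*\<alpha>\<bar> + real (n - 1)) * A"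
  have B: "B \<ge> 0" unfolding B_def using A by simp
  define h where "h = (\<lambda>\<xi>. mw \<alpha> \<xi> * ((1 - 2*\<alpha>) * f \<xi> + real (n - 1) * g \<xi>))"
  have inner: "\<bar>integral {0..y} h\<bar> \<le> B * (1+y) powr \<delta> * integral {0..y} (mw \<alpha>)" if y: "y \<ge> 0" for y
  proof -
    have "\<bar>integral {0..y} h\<bar> \<le> integral {0..y} (\<lambda>\<xi>. mw \<alpha> \<xi> * (B * (1+y) powr \<delta>))"
    proof (rule abs_integral_le)
      show "(\<lambda>\<xi>. mw \<alpha> \<xi> * (B * (1+y) powr \<delta>)) integrable_on {0..y}"
        using has_integral_mult_left[OF integrable_integral[OF mw_int[OF \<alpha>]]] by blast
      fix \<xi> assume \<xi>: "\<xi> \<in> {0..y}"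
      have m: "mw \<alpha> \<xi> \<ge> 0" using \<xi> mw_nonneg by auto
      have pw: "(1+\<xi>) powr \<delta> \<le> (1+y) powr \<delta>" using \<xi> \<delta> by (intro powr_mono2) auto
      have "\<bar>(1 - 2*\<alpha>) * f \<xi> + real (n - 1) * g \<xi>\<bar> \<le> \<bar>1 - 2*\<alpha>\<bar> * \<bar>f \<xi>\<bar> + real (n - 1) * \<bar>g \<xi>\<bar>"
        by (simp add: abs_mult abs_triangle_ineq [THEN order_trans])
      also have "\<dots> \<le> \<bar>1 - 2*\<alpha>\<bar> * (A * (1+\<xi>) powr \<delta>) + real (n - 1) * (A * (1+\<xi>) powr \<delta>)"
        using \<xi> hf hg by (intro add_mono mult_left_mono) auto
      also have "\<dots> = B * (1+\<xi>) powr \<delta>" unfolding B_def by (simp add: algebra_simps)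
      also have "\<dots> \<le> B * (1+y) powr \<delta>" using B pw by (rule mult_left_mono[rotated])
      finally have "\<bar>(1 - 2*\<alpha>) * f \<xi> + real (n - 1) * g \<xi>\<bar> \<le> B * (1+y) powr \<delta>" .
      thus "\<bar>h \<xi>\<bar> \<le> mw \<alpha> \<xi> * (B * (1+y) powr \<delta>)" unfolding h_def using m
        by (simp add: abs_mult mult_left_mono)
    qed
    also have "\<dots> = B * (1+y) powr \<delta> * integral {0..y} (mw \<alpha>)"
      by (simp add: integral_mult_left mult.commute)
    finally show ?thesis .
  qed
  have outer: "\<bar>1 / (y^2 * mw \<alpha> y) * integral {0..y} h\<bar> \<le> K * B * (1+y) powr (\<delta>-1)" if y: "y \<ge> 0" for y
  proof (cases "y = 0")
    case True thus ?thesis using K B by simp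
  next
    case False
    hence y0: "y > 0" using y by simp
    have den: "y^2 * mw \<alpha> y > 0" using y0 mw_pos by simp
    have "\<bar>1 / (y^2 * mw \<alpha> y) * integral {0..y} h\<bar> = \<bar>integral {0..y} h\<bar> / (y^2 * mw \<alpha> y)"
      using den by (simp add: abs_mult abs_of_pos[OF mw_pos[OF y0]])
    also have "\<dots> \<le> B * (1+y) powr \<delta> * integral {0..y} (mw \<alpha>) / (y^2 * mw \<alpha> y)"
      using inner[OF y] den by (simp add: divide_right_mono)
    also have "\<dots> = B * (1+y) powr \<delta> * (integral {0..y} (mw \<alpha>) / (y^2 * mw \<alpha> y))" by simp
    also have "\<dots> \<le> B * (1+y) powr \<delta> * (K / (1+y))"
      using ratio_bound[OF \<alpha> y0] B unfolding K_def by (intro mult_left_mono) auto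
    also have "\<dots> = K * B * ((1+y) powr \<delta> / (1+y))" by simp
    also have "(1+y) powr \<delta> / (1+y) = (1+y) powr (\<delta>-1)" using y0 by (simp add: powr_diff)
    finally show ?thesis .
  qed
  define C where "C = 4 * real n * (K * B / \<delta>)"
  have "\<bar>phi_step \<alpha> n f g x\<bar> \<le> C * (1+x) powr \<delta>" if x: "x \<ge> 0" for x
  proof -
    have I: "((\<lambda>y. K * B * (1+y) powr (\<delta>-1)) has_integral (K * B * ((1+x) powr \<delta> / \<delta> - 1 / \<delta>))) {0..x}"
      using has_integral_mult_right[OF int_powr[OF x \<delta>], of "K*B"] by (simp add: mult.assoc)
    have "\<bar>integral {0..x} (\<lambda>y. 1 / (y^2 * mw \<alpha> y) * integral {0..y} h)\<bar> \<le> integral {0..x} (\<lambda>y. K * B * (1+y) powr (\<delta>-1))"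
      by (rule abs_integral_le) (use I outer in auto)
    also have "\<dots> = K * B * ((1+x) powr \<delta> / \<delta> - 1 / \<delta>)" using I by (rule integral_unique)
    also have "\<dots> \<le> K * B * ((1+x) powr \<delta> / \<delta>)" using K B \<delta> by (intro mult_left_mono) auto
    finally have *: "\<bar>integral {0..x} (\<lambda>y. 1 / (y^2 * mw \<alpha> y) * integral {0..y} h)\<bar> \<le> K * B * ((1+x) powr \<delta> / \<delta>)" .
    have "\<bar>phi_step \<alpha> n f g x\<bar> = 4 * real n * \<bar>integral {0..x} (\<lambda>y. 1 / (y^2 * mw \<alpha> y) * integral {0..y} h)\<bar>"
      unfolding phi_step_def h_def by (simp add: abs_mult)
    also have "\<dots> \<le> 4 * real n * (K * B * ((1+x) powr \<delta> / \<delta>))" using * by (intro mult_left_mono) auto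
    also have "\<dots> = C * (1+x) powr \<delta>" unfolding C_def by simp
    finally show ?thesis .
  qed
  thus ?thesis by blast
qed


lemma phit_bound2:
  assumes \<alpha>: "\<alpha> < 1/2" and \<delta>: "\<delta> > 0"
  shows "(\<exists>C. \<forall>x\<ge>0. \<bar>phit \<alpha> k x\<bar> \<le> C * (1+x) powr \<delta>) \<and>
         (\<exists>C. \<forall>x\<ge>0. \<bar>phit \<alpha> (Suc k) x\<bar> \<le> C * (1+x) powr \<delta>)"
proof (induction k)
  case 0
  have a: "\<bar>phit \<alpha> 0 x\<bar> \<le> 1 * (1+x) powr \<delta>" if "x \<ge> 0" for x
    using ge_one_powr_ge_zero[of "1+x" \<delta>] that \<delta> by simp
  have "\<exists>C. \<forall>x\<ge>0. \<bar>phi_step \<alpha> 1 (\<lambda>x. 1) (\<lambda>x. 0) x\<bar> \<le> C * (1+x) powr \<delta>"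
    by (intro step_bound[OF \<alpha> \<delta>, of 1]) (use ge_one_powr_ge_zero \<delta> in auto)
  moreover have "\<exists>C. \<forall>x\<ge>0. \<bar>phit \<alpha> 0 x\<bar> \<le> C * (1+x) powr \<delta>" using a by blast
  ultimately show ?case by simp
next
  case (Suc k)
  then obtain C1 C2 where c1: "\<forall>x\<ge>0. \<bar>phit \<alpha> k x\<bar> \<le> C1 * (1+x) powr \<delta>"
    and c2: "\<forall>x\<ge>0. \<bar>phit \<alpha> (Suc k) x\<bar> \<le> C2 * (1+x) powr \<delta>" by blast
  define A where "A = max (max C1 C2) 0"
  have b1: "\<bar>phit \<alpha> k x\<bar> \<le> A * (1+x) powr \<delta>" if "x \<ge> 0" for x
  proof -
    have "C1 * (1+x) powr \<delta> \<le> A * (1+x) powr \<delta>" unfolding A_def by (intro mult_right_mono) auto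
    thus ?thesis using c1 that order_trans by blast
  qed
  have b2: "\<bar>phit \<alpha> (Suc k) x\<bar> \<le> A * (1+x) powr \<delta>" if "x \<ge> 0" for x
  proof -
    have "C2 * (1+x) powr \<delta> \<le> A * (1+x) powr \<delta>" unfolding A_def by (intro mult_right_mono) auto
    thus ?thesis using c2 that order_trans by blast
  qed
  have "\<exists>C. \<forall>x\<ge>0. \<bar>phi_step \<alpha> (Suc (Suc k)) (phit \<alpha> (Suc k)) (phit \<alpha> k) x\<bar> \<le> C * (1+x) powr \<delta>"
    by (rule step_bound[OF \<alpha> \<delta> _ b2 b1]) (simp add: A_def)
  thus ?case using Suc by simp
qed

theorem mainTheorem19:
  fixes \<alpha> :: real and k :: nat and \<epsilon> :: real
  assumes "\<alpha> < 1/2" and "\<epsilon> > 0"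
  shows "phit \<alpha> k \<in> O[at_top](\<lambda>x. x powr \<epsilon>)"
proof -
  obtain C where C: "\<forall>x\<ge>0. \<bar>phit \<alpha> k x\<bar> \<le> C * (1+x) powr \<epsilon>"
    using phit_bound2[OF assms] by blast
  have "eventually (\<lambda>x. norm (phit \<alpha> k x) \<le> (\<bar>C\<bar> * 2 powr \<epsilon>) * norm (x powr \<epsilon>)) at_top"
    using eventually_ge_at_top[of "1::real"]
  proof eventually_elim
    case (elim x)
    have "\<bar>phit \<alpha> k x\<bar> \<le> C * (1+x) powr \<epsilon>" using C elim by simp
    also have "\<dots> \<le> \<bar>C\<bar> * (1+x) powr \<epsilon>" by (intro mult_right_mono) auto
    also have "(1+x) powr \<epsilon> \<le> (2*x) powr \<epsilon>" using elim assms by (intro powr_mono2) auto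
    hence "\<bar>C\<bar> * (1+x) powr \<epsilon> \<le> \<bar>C\<bar> * (2*x) powr \<epsilon>" by (intro mult_left_mono) auto
    also have "(2*x) powr \<epsilon> = 2 powr \<epsilon> * x powr \<epsilon>" using elim by (simp add: powr_mult)
    finally show ?case using elim by (simp add: mult.assoc)
  qed
  thus ?thesis by (rule bigoI)
qed

end
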